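(* Let $X=\{x_1,\ldots,x_n\}$, $S=K[x_1,\ldots,x_n]$ over a field $K$, and let $F_1,\ldots,F_s\subset X$ be pairwise disjoint with $|F_i|=k>1$ for all $i$. Let $f_1,\ldots,f_{k^s}$ be the minimal monomial generators of $P_{F_1}\cdots P_{F_s}$, ordered (decreasingly) with respect to the lexicographic order with $x_1>x_2>\cdots>x_n$. For $i=2,\ldots,k^s$ let $n_i$ be the minimal number of homogeneous generators of $(f_1,\ldots,f_{i-1}):(f_i)$. Then $$\max\{n_i:i=2,\ldots,k^s\}=n_{k^s}=(k-1)s.$$ Moreover, for all $i$, the colon ideal $(f_1,\ldots,f_{i-1}):(f_i)$ is generated by linear forms.
   Context: For $F\subseteq X$, $P_F=(x_i:x_i\in F)\subset S$. *)

theory Defs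
  imports "HOL-Library.Poly_Mapping"
begin

(* Polynomials over a field 'a in variables x_i (i :: nat): monomials are
exponent vectors (nat \<Rightarrow>\<^sub>0 nat), polynomials are finitely supported maps
from monomials to coefficients, with the convolution product of Poly_Mapping. *)

type_synonym monomial = "nat \<Rightarrow>\<^sub>0 nat"
type_synonym 'a mpoly = "monomial \<Rightarrow>\<^sub>0 'a"

definition polyring :: "nat \<Rightarrow> ('a::field) mpoly set" where
  "polyring n = {p. \<forall>m\<in>Poly_Mapping.keys p. Poly_Mapping.keys m \<subseteq> {1..n}}"

definition monom :: "monomial \<Rightarrow> ('a::field) mpoly" where
  "monom m = Poly_Mapping.single m 1"

definition var :: "nat \<Rightarrow> ('a::field) mpoly" where
  "var i = monom (Poly_Mapping.single i 1)"

definition mdeg :: "monomial \<Rightarrow> nat" where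
  "mdeg m = (\<Sum>v\<in>Poly_Mapping.keys m. Poly_Mapping.lookup m v)"

definition homogeneous :: "('a::field) mpoly \<Rightarrow> bool" where
  "homogeneous p \<longleftrightarrow> (\<exists>d. \<forall>m\<in>Poly_Mapping.keys p. mdeg m = d)"

definition linear_form :: "('a::field) mpoly \<Rightarrow> bool" where
  "linear_form p \<longleftrightarrow> (\<forall>m\<in>Poly_Mapping.keys p. mdeg m = 1)"

definition ideal_gen :: "nat \<Rightarrow> ('a::field) mpoly set \<Rightarrow> 'a mpoly set" where
  "ideal_gen n G = {(\<Sum>g\<in>A. q g * g) | A q. finite A \<and> A \<subseteq> G \<and> (\<forall>g\<in>A. q g \<in> polyring n)}"

definition colon :: "nat \<Rightarrow> ('a::field) mpoly set \<Rightarrow> 'a mpoly \<Rightarrow> 'a mpoly set" where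
  "colon n I f = {p \<in> polyring n. p * f \<in> I}"

definition ideal_mult :: "nat \<Rightarrow> ('a::field) mpoly set \<Rightarrow> 'a mpoly set \<Rightarrow> 'a mpoly set" where
  "ideal_mult n I J = ideal_gen n {a * b | a b. a \<in> I \<and> b \<in> J}"

fun ideal_prod :: "nat \<Rightarrow> (nat \<Rightarrow> ('a::field) mpoly set) \<Rightarrow> nat \<Rightarrow> 'a mpoly set" where
  "ideal_prod n P 0 = polyring n"
| "ideal_prod n P (Suc s) = ideal_mult n (ideal_prod n P s) (P (Suc s))"

definition var_ideal :: "nat \<Rightarrow> nat set \<Rightarrow> ('a::field) mpoly set" where
  "var_ideal n F = ideal_gen n (var ` F)"

definition mdvd :: "monomial \<Rightarrow> monomial \<Rightarrow> bool" where
  "mdvd m m' \<longleftrightarrow> (\<forall>v. Poly_Mapping.lookup m v \<le> Poly_Mapping.lookup m' v)"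

definition min_monomial_gens :: "nat \<Rightarrow> ('a::field) mpoly set \<Rightarrow> monomial set" where
  "min_monomial_gens n I =
     {m. Poly_Mapping.keys m \<subseteq> {1..n} \<and> (monom m :: 'a mpoly) \<in> I \<and>
         (\<forall>m'. Poly_Mapping.keys m' \<subseteq> {1..n} \<and> (monom m' :: 'a mpoly) \<in> I \<and> mdvd m' m \<longrightarrow> m' = m)}"

definition lex_gt :: "monomial \<Rightarrow> monomial \<Rightarrow> bool" where
  "lex_gt m m' \<longleftrightarrow> (\<exists>v. Poly_Mapping.lookup m' v < Poly_Mapping.lookup m v \<and> (\<forall>u<v. Poly_Mapping.lookup m u = Poly_Mapping.lookup m' u))"

definition min_num_hom_gens :: "nat \<Rightarrow> ('a::field) mpoly set \<Rightarrow> nat" where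
  "min_num_hom_gens n I = (LEAST c. \<exists>G. finite G \<and> card G = c \<and> G \<subseteq> polyring n \<and>
      (\<forall>g\<in>G. homogeneous g) \<and> ideal_gen n G = I)"

end

theory Submission
  imports Defs "HOL-Library.Function_Algebras" "HOL.Vector_Spaces"
begin

lemma polyring_add: "p \<in> polyring n \<Longrightarrow> q \<in> polyring n \<Longrightarrow> p + q \<in> polyring n"
  unfolding polyring_def
proof (clarify)
  fix m v assume p: "\<forall>m\<in>Poly_Mapping.keys p. Poly_Mapping.keys m \<subseteq> {1..n}"
    and q: "\<forall>m\<in>Poly_Mapping.keys q. Poly_Mapping.keys m \<subseteq> {1..n}"
    and m: "m \<in> Poly_Mapping.keys (p+q)" and v: "v \<in> Poly_Mapping.keys m"
  have "m \<in> Poly_Mapping.keys p \<or> m \<in> Poly_Mapping.keys q" using keys_add[of p q] m by blast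
  then show "v \<in> {1..n}" using p q v by blast
qed

lemma polyring_mult: "p \<in> polyring n \<Longrightarrow> q \<in> polyring n \<Longrightarrow> p * q \<in> polyring n"
  unfolding polyring_def
proof (clarify)
  fix m v assume p: "\<forall>m\<in>Poly_Mapping.keys p. Poly_Mapping.keys m \<subseteq> {1..n}"
    and q: "\<forall>m\<in>Poly_Mapping.keys q. Poly_Mapping.keys m \<subseteq> {1..n}"
    and m: "m \<in> Poly_Mapping.keys (p*q)" and v: "v \<in> Poly_Mapping.keys m"
  obtain a b where "m = a + b" "a \<in> Poly_Mapping.keys p" "b \<in> Poly_Mapping.keys q"
    using keys_mult m by blast
  then have "v \<in> Poly_Mapping.keys a \<or> v \<in> Poly_Mapping.keys b" using keys_add[of a b] v by blast
  then show "v \<in> {1..n}" using p q \<open>a \<in> _\<close> \<open>b \<in> _\<close> by blast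
qed

lemma polyring_zero: "0 \<in> polyring n" unfolding polyring_def by simp
lemma polyring_one: "1 \<in> polyring n" unfolding polyring_def by simp
lemma polyring_single: "Poly_Mapping.keys m \<subseteq> {1..n} \<Longrightarrow> Poly_Mapping.single m c \<in> polyring n"
  unfolding polyring_def by simp
lemma polyring_monom: "Poly_Mapping.keys m \<subseteq> {1..n} \<Longrightarrow> monom m \<in> polyring n"
  unfolding monom_def by (rule polyring_single)

definition is_ideal :: "nat \<Rightarrow> ('a::field) mpoly set \<Rightarrow> bool" where
  "is_ideal n I \<longleftrightarrow> 0 \<in> I \<and> (\<forall>x\<in>I. \<forall>y\<in>I. x + y \<in> I) \<and> (\<forall>p\<in>polyring n. \<forall>x\<in>I. p * x \<in> I)"

lemma ideal_sum: "is_ideal n I \<Longrightarrow> (\<And>x. x \<in> A \<Longrightarrow> h x \<in> I) \<Longrightarrow> sum h A \<in> I"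
proof (induction A rule: infinite_finite_induct)
  case (infinite A) then show ?case by (simp add: is_ideal_def)
next
  case empty then show ?case by (simp add: is_ideal_def)
next
  case (insert x F) then show ?case by (simp add: is_ideal_def)
qed

lemma ideal_gen_least: "is_ideal n (I :: 'a::field mpoly set) \<Longrightarrow> G \<subseteq> I \<Longrightarrow> ideal_gen n G \<subseteq> I"
  unfolding ideal_gen_def
proof clarify
  fix A and q :: "'a mpoly \<Rightarrow> 'a mpoly" assume I: "is_ideal n I" and G: "G \<subseteq> I" and "finite A" "A \<subseteq> G" and q: "\<forall>g\<in>A. q g \<in> polyring n"
  show "(\<Sum>g\<in>A. q g * g) \<in> I"
    by (rule ideal_sum[OF I]) (use I G q \<open>A \<subseteq> G\<close> in \<open>auto simp: is_ideal_def\<close>)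
qed

lemma ideal_gen_base: "G \<subseteq> ideal_gen n G"
proof
  fix g assume "g \<in> G"
  then show "g \<in> ideal_gen n G" unfolding ideal_gen_def
    by (intro CollectI exI[of _ "{g}"] exI[of _ "\<lambda>_. 1"]) (simp add: polyring_one)
qed

lemma ideal_gen_mono: "G \<subseteq> H \<Longrightarrow> ideal_gen n G \<subseteq> ideal_gen n H"
  unfolding ideal_gen_def by blast

lemma ideal_gen_is_ideal: "is_ideal n (ideal_gen n (G :: 'a::field mpoly set))"
  unfolding is_ideal_def
proof (intro conjI ballI)
  show "0 \<in> ideal_gen n G" unfolding ideal_gen_def by (intro CollectI exI[of _ "{}"]) auto
next
  fix x y assume "x \<in> ideal_gen n G" "y \<in> ideal_gen n G"
  then obtain A1 q1 A2 q2 where x: "x = (\<Sum>g\<in>A1. q1 g * g)" "finite A1" "A1 \<subseteq> G" "\<forall>g\<in>A1. q1 g \<in> polyring n"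
    and y: "y = (\<Sum>g\<in>A2. q2 g * g)" "finite A2" "A2 \<subseteq> G" "\<forall>g\<in>A2. q2 g \<in> polyring n"
    unfolding ideal_gen_def by blast
  define q where "q g = (if g \<in> A1 then q1 g else 0) + (if g \<in> A2 then q2 g else 0)" for g
  have "(\<Sum>g\<in>A1 \<union> A2. q g * g) = (\<Sum>g\<in>A1 \<union> A2. (if g \<in> A1 then q1 g else 0) * g) + (\<Sum>g\<in>A1 \<union> A2. (if g \<in> A2 then q2 g else 0) * g)"
    unfolding q_def by (simp add: distrib_right sum.distrib)
  also have "(\<Sum>g\<in>A1 \<union> A2. (if g \<in> A1 then q1 g else 0) * g) = (\<Sum>g\<in>A1. (if g \<in> A1 then q1 g else 0) * g)"
    by (rule sum.mono_neutral_right) (use x y in auto)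
  also have "\<dots> = x" using x by simp
  also have "(\<Sum>g\<in>A1 \<union> A2. (if g \<in> A2 then q2 g else 0) * g) = (\<Sum>g\<in>A2. (if g \<in> A2 then q2 g else 0) * g)"
    by (rule sum.mono_neutral_right) (use x y in auto)
  also have "\<dots> = y" using y by simp
  finally have e: "x + y = (\<Sum>g\<in>A1 \<union> A2. q g * g)" by simp
  have qp: "\<forall>g\<in>A1 \<union> A2. q g \<in> polyring n"
    using x y by (auto simp: q_def polyring_add polyring_zero)
  show "x + y \<in> ideal_gen n G" unfolding ideal_gen_def
    apply (rule CollectI)
    apply (rule exI[of _ "A1 \<union> A2"])
    apply (rule exI[of _ q])
    using e qp x(2,3) y(2,3) by (intro conjI) auto
next
  fix p x :: "'a mpoly" assume p: "p \<in> polyring n" and "x \<in> ideal_gen n G"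
  then obtain A q where x: "x = (\<Sum>g\<in>A. q g * g)" "finite A" "A \<subseteq> G" "\<forall>g\<in>A. q g \<in> polyring n"
    unfolding ideal_gen_def by blast
  have e: "p * x = (\<Sum>g\<in>A. (p * q g) * g)" unfolding x(1) by (simp add: sum_distrib_left mult.assoc)
  have pq: "\<forall>g\<in>A. p * q g \<in> polyring n" using x p polyring_mult by blast
  show "p * x \<in> ideal_gen n G" unfolding ideal_gen_def
    apply (rule CollectI)
    apply (rule exI[of _ A])
    apply (rule exI[of _ "\<lambda>g. p * q g"])
    using e pq x(2,3) by (intro conjI)
qed

lemma ideal_gen_polyring: "G \<subseteq> polyring n \<Longrightarrow> ideal_gen n G \<subseteq> polyring n"
proof (rule ideal_gen_least)
  show "is_ideal n (polyring n)" unfolding is_ideal_def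
    using polyring_zero polyring_add polyring_mult by blast
qed

lemma ideal_gen_add: "x \<in> ideal_gen n G \<Longrightarrow> y \<in> ideal_gen n G \<Longrightarrow> x + y \<in> ideal_gen n G"
  using ideal_gen_is_ideal[of n G] unfolding is_ideal_def by blast
lemma ideal_gen_mult: "p \<in> polyring n \<Longrightarrow> x \<in> ideal_gen n G \<Longrightarrow> p * x \<in> ideal_gen n G"
  using ideal_gen_is_ideal[of n G] unfolding is_ideal_def by blast

lemma ideal_mult_gen:
  "ideal_mult n (ideal_gen n A) (ideal_gen n B) = ideal_gen n {a * b | a b. a \<in> A \<and> b \<in> (B :: 'a::field mpoly set)}"
  unfolding ideal_mult_def
proof (rule antisym)
  define J where "J = ideal_gen n {a * b | a b. a \<in> A \<and> b \<in> B}"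
  have J: "is_ideal n J" unfolding J_def by (rule ideal_gen_is_ideal)
  have Jb: "a * b \<in> J" if "a \<in> A" "b \<in> B" for a b
  proof -
    have "a * b \<in> {a * b | a b. a \<in> A \<and> b \<in> B}" using that by blast
    then show ?thesis unfolding J_def using ideal_gen_base[of "{a * b | a b. a \<in> A \<and> b \<in> B}" n] by (rule subsetD[rotated])
  qed
  have Jadd: "x + y \<in> J" if "x \<in> J" "y \<in> J" for x y
    using that unfolding J_def by (rule ideal_gen_add)
  have Jmult: "p * x \<in> J" if "p \<in> polyring n" "x \<in> J" for p x
    using that unfolding J_def by (rule ideal_gen_mult)
  have J0: "0 \<in> J" using J unfolding is_ideal_def by simp
  have step1: "x * h \<in> J" if h: "h \<in> B" and x: "x \<in> ideal_gen n A" for x h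
  proof -
    have "is_ideal n {x. x * h \<in> J}"
      unfolding is_ideal_def
    proof (intro conjI ballI)
      show "0 \<in> {x. x * h \<in> J}" using J0 by simp
    next
      fix x y assume "x \<in> {x. x * h \<in> J}" "y \<in> {x. x * h \<in> J}"
      then have "x * h + y * h \<in> J" using Jadd by simp
      then show "x + y \<in> {x. x * h \<in> J}" by (simp add: distrib_right)
    next
      fix p x :: "'a mpoly" assume "p \<in> polyring n" "x \<in> {x. x * h \<in> J}"
      then have "p * (x * h) \<in> J" using Jmult by simp
      then show "p * x \<in> {x. x * h \<in> J}" by (simp add: mult.assoc)
    qed
    moreover have "A \<subseteq> {x. x * h \<in> J}" using h Jb by (simp add: subset_iff)
    ultimately have "ideal_gen n A \<subseteq> {x. x * h \<in> J}" by (rule ideal_gen_least)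
    then show ?thesis using x by (simp add: subset_iff)
  qed
  have step2: "x * y \<in> J" if y: "y \<in> ideal_gen n B" and x: "x \<in> ideal_gen n A" for x y
  proof -
    have "is_ideal n {y. x * y \<in> J}"
      unfolding is_ideal_def
    proof (intro conjI ballI)
      show "0 \<in> {y. x * y \<in> J}" using J0 by simp
    next
      fix y z assume "y \<in> {y. x * y \<in> J}" "z \<in> {y. x * y \<in> J}"
      then have "x * y + x * z \<in> J" using Jadd by simp
      then show "y + z \<in> {y. x * y \<in> J}" by (simp add: distrib_left)
    next
      fix p y :: "'a mpoly" assume "p \<in> polyring n" "y \<in> {y. x * y \<in> J}"
      then have "p * (x * y) \<in> J" using Jmult by simp
      then show "p * y \<in> {y. x * y \<in> J}" by (simp add: mult.left_commute)
    qed
    moreover have "B \<subseteq> {y. x * y \<in> J}" using step1 x by (simp add: subset_iff)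
    ultimately have "ideal_gen n B \<subseteq> {y. x * y \<in> J}" by (rule ideal_gen_least)
    then show ?thesis using y by (simp add: subset_iff)
  qed
  have "{a * b |a b. a \<in> ideal_gen n A \<and> b \<in> ideal_gen n B} \<subseteq> J"
  proof
    fix c assume "c \<in> {a * b |a b. a \<in> ideal_gen n A \<and> b \<in> ideal_gen n B}"
    then obtain a b where "c = a * b" "a \<in> ideal_gen n A" "b \<in> ideal_gen n B" by blast
    then show "c \<in> J" using step2 by simp
  qed
  then show "ideal_gen n {a * b |a b. a \<in> ideal_gen n A \<and> b \<in> ideal_gen n B} \<subseteq> J"
    by (rule ideal_gen_least[OF J])
  have "{a * b |a b. a \<in> A \<and> b \<in> B} \<subseteq> {a * b |a b. a \<in> ideal_gen n A \<and> b \<in> ideal_gen n B}"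
  proof
    fix c assume "c \<in> {a * b |a b. a \<in> A \<and> b \<in> B}"
    then obtain a b where "c = a * b" "a \<in> A" "b \<in> B" by blast
    moreover have "a \<in> ideal_gen n A" "b \<in> ideal_gen n B"
      using calculation(2,3) ideal_gen_base[of A n] ideal_gen_base[of B n] by auto
    ultimately show "c \<in> {a * b |a b. a \<in> ideal_gen n A \<and> b \<in> ideal_gen n B}" by blast
  qed
  then show "J \<subseteq> ideal_gen n {a * b |a b. a \<in> ideal_gen n A \<and> b \<in> ideal_gen n B}"
    unfolding J_def by (rule ideal_gen_mono)
qed

lemma monom_mult: "(monom a :: 'a::field mpoly) * monom b = monom (a + b)"
  unfolding monom_def by (simp add: mult_single)

lemma var_monom: "var i = monom (Poly_Mapping.single i 1)" by (simp add: var_def)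

lemma mdvd_add: "mdvd u b \<Longrightarrow> mdvd u (a + b)"
  unfolding mdvd_def by (simp add: lookup_add add_increasing)

lemma monomial_ideal_keys:
  assumes "p \<in> ideal_gen n ((monom :: _ \<Rightarrow> 'a::field mpoly) ` U)" "t \<in> Poly_Mapping.keys p"
  shows "\<exists>u\<in>U. mdvd u t"
proof -
  define I where "I = {p::'a mpoly. \<forall>t\<in>Poly_Mapping.keys p. \<exists>u\<in>U. mdvd u t}"
  have "is_ideal n I" unfolding is_ideal_def
  proof (intro conjI ballI)
    show "0 \<in> I" unfolding I_def by simp
  next
    fix x y assume x: "x \<in> I" and y: "y \<in> I"
    show "x + y \<in> I" unfolding I_def
    proof (rule CollectI, rule ballI)
      fix t assume "t \<in> Poly_Mapping.keys (x + y)"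
      then have "t \<in> Poly_Mapping.keys x \<or> t \<in> Poly_Mapping.keys y"
        using keys_add[of x y] by blast
      then show "\<exists>u\<in>U. mdvd u t" using x y unfolding I_def by blast
    qed
  next
    fix p x assume x: "x \<in> I"
    show "p * x \<in> I" unfolding I_def
    proof (rule CollectI, rule ballI)
      fix t assume "t \<in> Poly_Mapping.keys (p * x)"
      then obtain a b where ab: "t = a + b" "b \<in> Poly_Mapping.keys x"
        using keys_mult[of p x] by blast
      then obtain u where "u \<in> U" "mdvd u b" using x unfolding I_def by blast
      then show "\<exists>u\<in>U. mdvd u t" unfolding ab(1) using mdvd_add by blast
    qed
  qed
  moreover have "monom ` U \<subseteq> I" unfolding I_def by (auto simp: monom_def mdvd_def)
  ultimately have "ideal_gen n (monom ` U) \<subseteq> I" by (rule ideal_gen_least)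
  then show ?thesis using assms unfolding I_def by blast
qed

lemma monomial_ideal_mem:
  assumes "Poly_Mapping.keys m \<subseteq> {1..n}" "u \<in> U" "mdvd u m"
  shows "(monom m :: 'a::field mpoly) \<in> ideal_gen n (monom ` U)"
proof -
  have e: "m = (m - u) + u"
    using assms(3) by (intro poly_mapping_eqI) (simp add: lookup_add lookup_minus mdvd_def)
  have "Poly_Mapping.keys (m - u) \<subseteq> Poly_Mapping.keys m"
    by (auto simp: in_keys_iff lookup_minus)
  then have "(monom (m - u) :: 'a mpoly) \<in> polyring n" using assms(1) polyring_monom by blast
  moreover have "(monom u :: 'a mpoly) \<in> ideal_gen n (monom ` U)" using assms(2) ideal_gen_base by blast
  ultimately have "(monom (m-u) :: 'a mpoly) * monom u \<in> ideal_gen n (monom ` U)" by (rule ideal_gen_mult)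
  then show ?thesis by (simp add: monom_mult e[symmetric])
qed

definition msum :: "nat \<Rightarrow> (nat \<Rightarrow> nat) \<Rightarrow> monomial" where
  "msum s a = (\<Sum>j\<in>{1..s}. Poly_Mapping.single (a j) 1)"

definition Mset :: "nat \<Rightarrow> (nat \<Rightarrow> nat set) \<Rightarrow> monomial set" where
  "Mset s F = {msum s a | a. \<forall>j\<in>{1..s}. a j \<in> F j}"

lemma msum_Suc: "msum (Suc s) a = msum s a + Poly_Mapping.single (a (Suc s)) 1"
  unfolding msum_def by simp

lemma msum_cong: "(\<And>j. j \<in> {1..s} \<Longrightarrow> a j = b j) \<Longrightarrow> msum s a = msum s b"
  unfolding msum_def by (rule sum.cong) auto

lemma ideal_one_gen: "ideal_gen n {1::'a::field mpoly} = polyring n"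
proof (rule antisym)
  show "ideal_gen n {1::'a mpoly} \<subseteq> polyring n"
    by (rule ideal_gen_polyring) (simp add: polyring_one)
  show "polyring n \<subseteq> ideal_gen n {1::'a mpoly}"
  proof
    fix p :: "'a mpoly" assume "p \<in> polyring n"
    moreover have "1 \<in> ideal_gen n {1::'a mpoly}" using ideal_gen_base[of "{1::'a mpoly}" n] by simp
    ultimately have "p * 1 \<in> ideal_gen n {1::'a mpoly}" by (rule ideal_gen_mult)
    then show "p \<in> ideal_gen n {1::'a mpoly}" by simp
  qed
qed

lemma ideal_prod_eq:
  "ideal_prod n (\<lambda>j. var_ideal n (F j)) s = (ideal_gen n (monom ` Mset s F) :: 'a::field mpoly set)"
proof (induction s)
  case 0
  have "Mset 0 F = {0}" unfolding Mset_def msum_def by auto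
  then have "(monom ` Mset 0 F :: 'a mpoly set) = {1}" by (simp add: monom_def)
  then show ?case by (simp add: ideal_one_gen)
next
  case (Suc s)
  have "{a * b | a b. a \<in> (monom ` Mset s F :: 'a mpoly set) \<and> b \<in> var ` F (Suc s)} = monom ` Mset (Suc s) F"
  proof (rule antisym; rule subsetI)
    fix x assume "x \<in> {a * b | a b. a \<in> (monom ` Mset s F :: 'a mpoly set) \<and> b \<in> var ` F (Suc s)}"
    then obtain al c where al: "\<forall>j\<in>{1..s}. al j \<in> F j" and c: "c \<in> F (Suc s)"
      and x: "x = monom (msum s al) * var c" unfolding Mset_def by blast
    define be where "be = al(Suc s := c)"
    have "msum s be = msum s al" by (rule msum_cong) (simp add: be_def)
    then have "msum (Suc s) be = msum s al + Poly_Mapping.single c 1" by (simp add: msum_Suc be_def)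
    moreover have "\<forall>j\<in>{1..Suc s}. be j \<in> F j" using al c by (auto simp: be_def le_Suc_eq)
    ultimately have "msum s al + Poly_Mapping.single c 1 \<in> Mset (Suc s) F" unfolding Mset_def by force
    moreover have "x = monom (msum s al + Poly_Mapping.single c 1)" by (simp add: x var_monom monom_mult)
    ultimately show "x \<in> monom ` Mset (Suc s) F" by blast
  next
    fix x assume "x \<in> (monom ` Mset (Suc s) F :: 'a mpoly set)"
    then obtain be where be: "\<forall>j\<in>{1..Suc s}. be j \<in> F j" and x: "x = monom (msum (Suc s) be)"
      unfolding Mset_def by blast
    have "msum s be \<in> Mset s F" using be unfolding Mset_def by force
    moreover have "be (Suc s) \<in> F (Suc s)" using be by simp
    moreover have "x = monom (msum s be) * var (be (Suc s))" by (simp add: x var_monom monom_mult msum_Suc)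
    ultimately show "x \<in> {a * b | a b. a \<in> (monom ` Mset s F :: 'a mpoly set) \<and> b \<in> var ` F (Suc s)}" by blast
  qed
  then show ?case using Suc by (simp add: var_ideal_def ideal_mult_gen)
qed

lemma mdvd_refl: "mdvd m m" unfolding mdvd_def by simp
lemma mdvd_trans: "mdvd a b \<Longrightarrow> mdvd b c \<Longrightarrow> mdvd a c" unfolding mdvd_def using order_trans by blast
lemma mdvd_antisym: "mdvd a b \<Longrightarrow> mdvd b a \<Longrightarrow> a = b"
  unfolding mdvd_def by (intro poly_mapping_eqI) (simp add: order_antisym)

lemma lex_irrefl: "\<not> lex_gt m m" unfolding lex_gt_def by auto

lemma lex_asym: "lex_gt a b \<Longrightarrow> \<not> lex_gt b a"
proof
  assume "lex_gt a b" "lex_gt b a"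
  then obtain v w where v: "Poly_Mapping.lookup b v < Poly_Mapping.lookup a v" "\<forall>u<v. Poly_Mapping.lookup a u = Poly_Mapping.lookup b u"
    and w: "Poly_Mapping.lookup a w < Poly_Mapping.lookup b w" "\<forall>u<w. Poly_Mapping.lookup b u = Poly_Mapping.lookup a u"
    unfolding lex_gt_def by blast
  show False
  proof (cases v w rule: linorder_cases)
    case less then show ?thesis using v w by force
  next
    case equal then show ?thesis using v w by simp
  next
    case greater then show ?thesis using v w by force
  qed
qed

definition Bset :: "nat \<Rightarrow> (nat \<Rightarrow> nat set) \<Rightarrow> (nat \<Rightarrow> nat) \<Rightarrow> nat set" where
  "Bset s F a = {b. \<exists>j\<in>{1..s}. b \<in> F j \<and> b < a j}"

locale blocks =
  fixes n s :: nat and F :: "nat \<Rightarrow> nat set"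
  assumes Fsub: "\<And>j. j \<in> {1..s} \<Longrightarrow> F j \<subseteq> {1..n}"
    and disj: "\<And>i j. i \<in> {1..s} \<Longrightarrow> j \<in> {1..s} \<Longrightarrow> i \<noteq> j \<Longrightarrow> F i \<inter> F j = {}"
begin

lemma same_block: "i \<in> {1..s} \<Longrightarrow> j \<in> {1..s} \<Longrightarrow> x \<in> F i \<Longrightarrow> x \<in> F j \<Longrightarrow> i = j"
  using disj by blast

lemma good_inj: "\<forall>j\<in>{1..s}. a j \<in> F j \<Longrightarrow> inj_on a {1..s}"
  unfolding inj_on_def
proof (intro ballI impI)
  fix i j assume a: "\<forall>j\<in>{1..s}. a j \<in> F j" and i: "i \<in> {1..s}" and j: "j \<in> {1..s}" and e: "a i = a j"
  have "a i \<in> F i" using a i by blast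
  moreover have "a j \<in> F j" using a j by blast
  ultimately have "a i \<in> F i" "a i \<in> F j" using e by simp_all
  then show "i = j" using same_block[OF i j] by blast
qed

lemma msum_lookup:
  assumes "\<forall>j\<in>{1..s}. a j \<in> F j"
  shows "Poly_Mapping.lookup (msum s a) v = (if v \<in> a ` {1..s} then 1 else 0)"
proof -
  have "Poly_Mapping.lookup (msum s a) v = (\<Sum>j\<in>{1..s}. (\<lambda>w. if w = v then 1 else 0) (a j))"
    unfolding msum_def lookup_sum by (intro sum.cong) (auto simp: lookup_single when_def)
  also have "\<dots> = (\<Sum>w\<in>a ` {1..s}. if w = v then 1 else 0)"
    by (subst sum.reindex[OF good_inj[OF assms]]) (simp add: comp_def)
  also have "\<dots> = (if v \<in> a ` {1..s} then 1 else 0)" by (simp add: sum.delta)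
  finally show ?thesis .
qed

lemma msum_keys:
  assumes "\<forall>j\<in>{1..s}. a j \<in> F j"
  shows "Poly_Mapping.keys (msum s a) = a ` {1..s}"
  using msum_lookup[OF assms] by (auto simp: in_keys_iff split: if_splits)

lemma msum_keys_sub:
  assumes "\<forall>j\<in>{1..s}. a j \<in> F j"
  shows "Poly_Mapping.keys (msum s a) \<subseteq> {1..n}"
proof
  fix v assume "v \<in> Poly_Mapping.keys (msum s a)"
  then obtain j where j: "j \<in> {1..s}" "v = a j" using msum_keys[OF assms] by blast
  then have "v \<in> F j" using assms by simp
  then show "v \<in> {1..n}" using Fsub[OF j(1)] by blast
qed

lemma M_antichain:
  assumes a: "\<forall>j\<in>{1..s}. a j \<in> F j" and b: "\<forall>j\<in>{1..s}. b j \<in> F j"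
    and d: "mdvd (msum s a) (msum s b)"
  shows "msum s a = msum s b"
proof -
  have sub: "a ` {1..s} \<subseteq> b ` {1..s}"
  proof
    fix v assume "v \<in> a ` {1..s}"
    then have "Poly_Mapping.lookup (msum s a) v = 1" using msum_lookup[OF a] by simp
    then have "Poly_Mapping.lookup (msum s b) v \<ge> 1" using d unfolding mdvd_def by metis
    then show "v \<in> b ` {1..s}" using msum_lookup[OF b, of v] by (simp split: if_splits)
  qed
  have "card (a ` {1..s}) = card (b ` {1..s})"
    using card_image[OF good_inj[OF a]] card_image[OF good_inj[OF b]] by simp
  then have "a ` {1..s} = b ` {1..s}" using sub by (intro card_subset_eq) auto
  then show ?thesis by (intro poly_mapping_eqI) (simp add: msum_lookup[OF a] msum_lookup[OF b])
qed

lemma mingens_eq: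
  "min_monomial_gens n (ideal_gen n (monom ` Mset s F) :: 'a::field mpoly set) = Mset s F"
proof (rule antisym; rule subsetI)
  fix m assume m: "m \<in> min_monomial_gens n (ideal_gen n (monom ` Mset s F) :: 'a::field mpoly set)"
  then have mk: "Poly_Mapping.keys m \<subseteq> {1..n}" and mI: "(monom m :: 'a mpoly) \<in> ideal_gen n (monom ` Mset s F)"
    and mmin: "\<And>m'. Poly_Mapping.keys m' \<subseteq> {1..n} \<Longrightarrow> (monom m' :: 'a mpoly) \<in> ideal_gen n (monom ` Mset s F) \<Longrightarrow> mdvd m' m \<Longrightarrow> m' = m"
    unfolding min_monomial_gens_def by auto
  have "m \<in> Poly_Mapping.keys (monom m :: 'a mpoly)" by (simp add: monom_def)
  then obtain u where u: "u \<in> Mset s F" "mdvd u m" using monomial_ideal_keys[OF mI] by blast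
  then obtain a where a: "\<forall>j\<in>{1..s}. a j \<in> F j" "u = msum s a" unfolding Mset_def by blast
  have "Poly_Mapping.keys u \<subseteq> {1..n}" using msum_keys_sub[OF a(1)] a(2) by simp
  moreover have "(monom u :: 'a mpoly) \<in> ideal_gen n (monom ` Mset s F)"
    using u(1) ideal_gen_base[of "monom ` Mset s F" n] by blast
  ultimately have "u = m" using mmin u(2) by blast
  then show "m \<in> Mset s F" using u(1) by simp
next
  fix m assume m: "m \<in> Mset s F"
  then obtain a where a: "\<forall>j\<in>{1..s}. a j \<in> F j" "m = msum s a" unfolding Mset_def by blast
  have mk: "Poly_Mapping.keys m \<subseteq> {1..n}" using msum_keys_sub[OF a(1)] a(2) by simp
  have mI: "(monom m :: 'a mpoly) \<in> ideal_gen n (monom ` Mset s F)"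
    using m ideal_gen_base[of "monom ` Mset s F" n] by blast
  have "m' = m" if m': "Poly_Mapping.keys m' \<subseteq> {1..n}" "(monom m' :: 'a mpoly) \<in> ideal_gen n (monom ` Mset s F)" "mdvd m' m" for m'
  proof -
    have "m' \<in> Poly_Mapping.keys (monom m' :: 'a mpoly)" by (simp add: monom_def)
    then obtain u where u: "u \<in> Mset s F" "mdvd u m'" using monomial_ideal_keys[OF m'(2)] by blast
    then obtain b where b: "\<forall>j\<in>{1..s}. b j \<in> F j" "u = msum s b" unfolding Mset_def by blast
    have "mdvd u m" using mdvd_trans[OF u(2) m'(3)] .
    then have "u = m" using M_antichain[OF b(1) a(1)] a(2) b(2) by simp
    then show "m' = m" using mdvd_antisym[OF m'(3)] u(2) by simp
  qed
  then show "m \<in> min_monomial_gens n (ideal_gen n (monom ` Mset s F) :: 'a::field mpoly set)"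
    unfolding min_monomial_gens_def using mk mI by blast
qed

lemma good_upd: "\<forall>j\<in>{1..s}. a j \<in> F j \<Longrightarrow> b \<in> F j \<Longrightarrow> \<forall>i\<in>{1..s}. (a(j:=b)) i \<in> F i"
  by auto

lemma swap_lex:
  assumes a: "\<forall>j\<in>{1..s}. a j \<in> F j" and j: "j \<in> {1..s}" and b: "b \<in> F j" "b < a j"
  shows "lex_gt (msum s (a(j:=b))) (msum s a)"
proof -
  have a': "\<forall>i\<in>{1..s}. (a(j:=b)) i \<in> F i" using good_upd[OF a b(1)] .
  have notin: "b \<notin> a ` {1..s}"
  proof
    assume "b \<in> a ` {1..s}"
    then obtain j' where j': "j' \<in> {1..s}" "b = a j'" by blast
    then have "b \<in> F j'" using a by simp
    then have "j' = j" using same_block[OF j'(1) j] b(1) by blast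
    then show False using j' b(2) by simp
  qed
  have inb: "b \<in> (a(j:=b)) ` {1..s}" using j by force
  have below: "w \<in> (a(j:=b)) ` {1..s} \<longleftrightarrow> w \<in> a ` {1..s}" if w: "w < b" for w
  proof
    assume "w \<in> (a(j:=b)) ` {1..s}"
    then obtain j' where j': "j' \<in> {1..s}" "w = (a(j:=b)) j'" by blast
    then have "j' \<noteq> j" using w by auto
    then show "w \<in> a ` {1..s}" using j' by auto
  next
    assume "w \<in> a ` {1..s}"
    then obtain j' where j': "j' \<in> {1..s}" "w = a j'" by blast
    then have "j' \<noteq> j" using w b(2) by auto
    then show "w \<in> (a(j:=b)) ` {1..s}" using j' by force
  qed
  show ?thesis unfolding lex_gt_def
    apply (rule exI[of _ b])
    using notin inb below by (simp add: msum_lookup[OF a] msum_lookup[OF a'])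
qed

lemma swap_dvd:
  assumes a: "\<forall>j\<in>{1..s}. a j \<in> F j" and j: "j \<in> {1..s}" and b: "b \<in> F j"
  shows "mdvd (msum s (a(j:=b))) (msum s a + Poly_Mapping.single b 1)"
  unfolding mdvd_def
proof
  fix w
  have a': "\<forall>i\<in>{1..s}. (a(j:=b)) i \<in> F i" using good_upd[OF a b] .
  show "Poly_Mapping.lookup (msum s (a(j:=b))) w \<le> Poly_Mapping.lookup (msum s a + Poly_Mapping.single b 1) w"
  proof (cases "w \<in> (a(j:=b)) ` {1..s}")
    case True
    then obtain j' where j': "j' \<in> {1..s}" "w = (a(j:=b)) j'" by blast
    show ?thesis
    proof (cases "j' = j")
      case True then show ?thesis using j' by (simp add: lookup_add msum_lookup[OF a'] lookup_single)
    next
      case False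
      then have "w \<in> a ` {1..s}" using j' by auto
      then show ?thesis by (simp add: lookup_add msum_lookup[OF a'] msum_lookup[OF a])
    qed
  next
    case False then show ?thesis by (simp add: lookup_add msum_lookup[OF a'])
  qed
qed

end

lemma if_one_nat: "(if P then 1 else 0) = (1::nat) \<Longrightarrow> P" by (cases P) auto

lemma poly_expand: "p = (\<Sum>t\<in>Poly_Mapping.keys p. Poly_Mapping.single t (Poly_Mapping.lookup p t))"
proof (rule poly_mapping_eqI)
  fix k
  have "Poly_Mapping.lookup (\<Sum>t\<in>Poly_Mapping.keys p. Poly_Mapping.single t (Poly_Mapping.lookup p t)) k
      = (\<Sum>t\<in>Poly_Mapping.keys p. if t = k then Poly_Mapping.lookup p t else 0)"
    unfolding lookup_sum by (intro sum.cong) (auto simp: lookup_single when_def)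
  also have "\<dots> = (if k \<in> Poly_Mapping.keys p then Poly_Mapping.lookup p k else 0)"
    by (simp add: sum.delta')
  also have "\<dots> = Poly_Mapping.lookup p k" by (simp add: in_keys_iff)
  finally show "Poly_Mapping.lookup p k = Poly_Mapping.lookup (\<Sum>t\<in>Poly_Mapping.keys p. Poly_Mapping.single t (Poly_Mapping.lookup p t)) k" by simp
qed

lemma lookup_mult_monom:
  "Poly_Mapping.lookup (p * monom m) (t + m) = Poly_Mapping.lookup (p :: 'a::field mpoly) t"
proof -
  have "p * monom m = (\<Sum>t\<in>Poly_Mapping.keys p. Poly_Mapping.single t (Poly_Mapping.lookup p t)) * monom m"
    using arg_cong[where f="\<lambda>x. x * monom m", OF poly_expand[of p]] .
  also have "\<dots> = (\<Sum>t'\<in>Poly_Mapping.keys p. Poly_Mapping.single (t' + m) (Poly_Mapping.lookup p t'))"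
    by (simp add: sum_distrib_right monom_def mult_single)
  finally have e: "p * monom m = (\<Sum>t'\<in>Poly_Mapping.keys p. Poly_Mapping.single (t' + m) (Poly_Mapping.lookup p t'))" .
  have "Poly_Mapping.lookup (p * monom m) (t + m) = (\<Sum>t'\<in>Poly_Mapping.keys p. if t' = t then Poly_Mapping.lookup p t' else 0)"
    unfolding e lookup_sum by (intro sum.cong) (auto simp: lookup_single when_def)
  also have "\<dots> = (if t \<in> Poly_Mapping.keys p then Poly_Mapping.lookup p t else 0)"
    by (simp add: sum.delta')
  also have "\<dots> = Poly_Mapping.lookup p t" by (simp add: in_keys_iff)
  finally show ?thesis .
qed

context blocks
begin

lemma lex_witness:
  assumes a: "\<forall>j\<in>{1..s}. a j \<in> F j" and c: "\<forall>j\<in>{1..s}. c j \<in> F j"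
    and lex: "lex_gt (msum s c) (msum s a)"
  shows "\<exists>v\<in>Bset s F a. Poly_Mapping.lookup (msum s c) v = 1 \<and> Poly_Mapping.lookup (msum s a) v = 0"
proof -
  obtain v where v: "Poly_Mapping.lookup (msum s a) v < Poly_Mapping.lookup (msum s c) v"
    and eq: "\<forall>u<v. Poly_Mapping.lookup (msum s c) u = Poly_Mapping.lookup (msum s a) u"
    using lex unfolding lex_gt_def by blast
  have vv: "(if v \<in> a ` {1..s} then 1 else 0) < (if v \<in> c ` {1..s} then (1::nat) else 0)"
    using v unfolding msum_lookup[OF a] msum_lookup[OF c] .
  have vc: "v \<in> c ` {1..s}" using vv by (cases "v \<in> c ` {1..s}") simp_all
  have va: "v \<notin> a ` {1..s}"
  proof
    assume "v \<in> a ` {1..s}"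
    then have "(1::nat) < (if v \<in> c ` {1..s} then 1 else 0)" using vv by simp
    then show False by (simp split: if_splits)
  qed
  obtain j where j: "j \<in> {1..s}" "v = c j" using vc by blast
  have vF: "v \<in> F j" using c j by simp
  have ne: "a j \<noteq> v" using va j(1) by blast
  have "v < a j"
  proof (rule ccontr)
    assume "\<not> v < a j"
    then have lt: "a j < v" using ne by simp
    have "a j \<in> a ` {1..s}" using j(1) by blast
    then have "Poly_Mapping.lookup (msum s c) (a j) = 1" using eq lt by (simp add: msum_lookup[OF a])
    then have "a j \<in> c ` {1..s}" unfolding msum_lookup[OF c] by (rule if_one_nat)
    then obtain j' where j': "j' \<in> {1..s}" "a j = c j'" by blast
    have "c j' \<in> F j'" using c j'(1) by blast
    then have "a j \<in> F j'" using j'(2) by simp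
    moreover have "a j \<in> F j" using a j(1) by blast
    ultimately have "a j \<in> F j'" "a j \<in> F j" by simp_all
    then have "j' = j" using same_block[OF j'(1) j(1)] by blast
    then show False using j' j ne by simp
  qed
  then have "v \<in> Bset s F a" unfolding Bset_def using j(1) vF by blast
  moreover have "Poly_Mapping.lookup (msum s c) v = 1 \<and> Poly_Mapping.lookup (msum s a) v = 0"
    using vc va by (simp add: msum_lookup[OF a] msum_lookup[OF c])
  ultimately show ?thesis by blast
qed

lemma colon_is_ideal:
  "is_ideal n (colon n (ideal_gen n G) (g :: 'a::field mpoly))"
  unfolding is_ideal_def colon_def
proof (intro conjI ballI)
  show "0 \<in> {p \<in> polyring n. p * g \<in> ideal_gen n G}"
    using polyring_zero ideal_gen_is_ideal[of n G] unfolding is_ideal_def by simp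
next
  fix x y assume x: "x \<in> {p \<in> polyring n. p * g \<in> ideal_gen n G}" and y: "y \<in> {p \<in> polyring n. p * g \<in> ideal_gen n G}"
  have "x * g + y * g \<in> ideal_gen n G" by (rule ideal_gen_add) (use x y in auto)
  moreover have "x + y \<in> polyring n" by (rule polyring_add) (use x y in auto)
  ultimately show "x + y \<in> {p \<in> polyring n. p * g \<in> ideal_gen n G}" by (simp add: distrib_right)
next
  fix p x :: "'a mpoly" assume p: "p \<in> polyring n" and x: "x \<in> {p \<in> polyring n. p * g \<in> ideal_gen n G}"
  have "p * (x * g) \<in> ideal_gen n G" by (rule ideal_gen_mult) (use p x in auto)
  moreover have "p * x \<in> polyring n" by (rule polyring_mult) (use p x in auto)
  ultimately show "p * x \<in> {p \<in> polyring n. p * g \<in> ideal_gen n G}" by (simp add: mult.assoc)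
qed

lemma colon_eq:
  assumes a: "\<forall>j\<in>{1..s}. a j \<in> F j"
  shows "colon n (ideal_gen n (monom ` {u \<in> Mset s F. lex_gt u (msum s a)})) (monom (msum s a) :: 'a::field mpoly)
       = ideal_gen n (var ` Bset s F a)"
proof (rule antisym)
  define U where "U = {u \<in> Mset s F. lex_gt u (msum s a)}"
  define f where "f = msum s a"
  have fk: "Poly_Mapping.keys f \<subseteq> {1..n}" unfolding f_def by (rule msum_keys_sub[OF a])
  show "ideal_gen n (var ` Bset s F a) \<subseteq> colon n (ideal_gen n (monom ` {u \<in> Mset s F. lex_gt u (msum s a)})) (monom (msum s a) :: 'a::field mpoly)"
  proof (rule ideal_gen_least[OF colon_is_ideal]; rule subsetI)
    fix x assume "x \<in> (var ` Bset s F a :: 'a mpoly set)"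
    then obtain b where x: "x = var b" and "b \<in> Bset s F a" by blast
    then obtain j where j: "j \<in> {1..s}" "b \<in> F j" "b < a j" unfolding Bset_def by blast
    have bn: "b \<in> {1..n}" using Fsub[OF j(1)] j(2) by blast
    have kb: "Poly_Mapping.keys (Poly_Mapping.single b (1::nat)) \<subseteq> {1..n}" using bn by simp
    have "(var b :: 'a mpoly) \<in> polyring n" unfolding var_monom by (rule polyring_monom[OF kb])
    define u where "u = msum s (a(j:=b))"
    have "u \<in> Mset s F" unfolding u_def Mset_def
      by (rule CollectI, rule exI[of _ "a(j:=b)"]) (use good_upd[OF a j(2)] in simp)
    moreover have "lex_gt u f" unfolding u_def f_def by (rule swap_lex[OF a j])
    ultimately have uU: "u \<in> U" unfolding U_def f_def by simp
    have ud: "mdvd u (Poly_Mapping.single b 1 + f)"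
      using swap_dvd[OF a j(1,2)] unfolding u_def f_def by (simp add: add.commute)
    have "Poly_Mapping.keys (Poly_Mapping.single b 1 + f) \<subseteq> {1..n}"
      using keys_add[of "Poly_Mapping.single b (1::nat)" f] kb fk by (simp add: subset_iff) blast
    then have "(monom (Poly_Mapping.single b 1 + f) :: 'a mpoly) \<in> ideal_gen n (monom ` U)"
      by (rule monomial_ideal_mem[OF _ uU ud])
    then have "(var b :: 'a mpoly) * monom f \<in> ideal_gen n (monom ` U)" by (simp add: var_monom monom_mult)
    then show "x \<in> colon n (ideal_gen n (monom ` {u \<in> Mset s F. lex_gt u (msum s a)})) (monom (msum s a))"
      unfolding colon_def x U_def f_def using \<open>(var b :: 'a mpoly) \<in> polyring n\<close> by simp
  qed
  show "colon n (ideal_gen n (monom ` {u \<in> Mset s F. lex_gt u (msum s a)})) (monom (msum s a) :: 'a::field mpoly) \<subseteq> ideal_gen n (var ` Bset s F a)"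

  proof
    fix x :: "'a mpoly" assume "x \<in> colon n (ideal_gen n (monom ` {u \<in> Mset s F. lex_gt u (msum s a)})) (monom (msum s a))"
    then have "x \<in> colon n (ideal_gen n (monom ` U)) (monom f)" unfolding U_def f_def .
    then have xp: "x \<in> polyring n" and xI: "x * monom f \<in> ideal_gen n (monom ` U)" unfolding colon_def by auto
    have tm: "Poly_Mapping.single t (Poly_Mapping.lookup x t) \<in> ideal_gen n (var ` Bset s F a)"
      if t: "t \<in> Poly_Mapping.keys x" for t
    proof -
      have "Poly_Mapping.lookup (x * monom f) (t + f) \<noteq> 0"
        using t by (simp add: lookup_mult_monom in_keys_iff)
      then have "t + f \<in> Poly_Mapping.keys (x * monom f)" by (simp add: in_keys_iff)
      from monomial_ideal_keys[OF xI this] obtain u where uU: "u \<in> U" and ud: "mdvd u (t + f)" by blast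
      have lex: "lex_gt u f" using uU unfolding U_def f_def by simp
      have "u \<in> Mset s F" using uU unfolding U_def by simp
      then obtain c where c: "\<forall>j\<in>{1..s}. c j \<in> F j" and uc: "u = msum s c"
        unfolding Mset_def by blast
      obtain v where vB: "v \<in> Bset s F a" and v1: "Poly_Mapping.lookup u v = 1" and v0: "Poly_Mapping.lookup f v = 0"
        using lex_witness[OF a c lex[unfolded uc f_def]] unfolding uc f_def by blast
      have "Poly_Mapping.lookup u v \<le> Poly_Mapping.lookup (t + f) v" using ud unfolding mdvd_def by blast
      then have tv: "1 \<le> Poly_Mapping.lookup t v" using v1 v0 by (simp add: lookup_add)
      have te: "t = (t - Poly_Mapping.single v 1) + Poly_Mapping.single v 1"
        using tv by (intro poly_mapping_eqI) (auto simp: lookup_add lookup_minus lookup_single when_def)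
      have "Poly_Mapping.keys (t - Poly_Mapping.single v 1) \<subseteq> Poly_Mapping.keys t"
        by (auto simp: in_keys_iff lookup_minus)
      moreover have "Poly_Mapping.keys t \<subseteq> {1..n}" using xp t unfolding polyring_def by (simp add: Ball_def)
      ultimately have "Poly_Mapping.keys (t - Poly_Mapping.single v 1) \<subseteq> {1..n}" by (rule subset_trans)
      then have "Poly_Mapping.single (t - Poly_Mapping.single v 1) (Poly_Mapping.lookup x t) \<in> polyring n"
        by (rule polyring_single)
      moreover have "(var v :: 'a mpoly) \<in> ideal_gen n (var ` Bset s F a)"
        by (rule subsetD[OF ideal_gen_base imageI[OF vB]])
      ultimately have "Poly_Mapping.single (t - Poly_Mapping.single v 1) (Poly_Mapping.lookup x t) * var v \<in> ideal_gen n (var ` Bset s F a)"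
        by (rule ideal_gen_mult)
      moreover have "Poly_Mapping.single (t - Poly_Mapping.single v 1) (Poly_Mapping.lookup x t) * (var v :: 'a mpoly)
          = Poly_Mapping.single t (Poly_Mapping.lookup x t)"
        unfolding var_def monom_def mult_single te[symmetric] by simp
      ultimately show ?thesis by simp
    qed
    have "(\<Sum>t\<in>Poly_Mapping.keys x. Poly_Mapping.single t (Poly_Mapping.lookup x t)) \<in> ideal_gen n (var ` Bset s F a)"
      using ideal_sum[OF ideal_gen_is_ideal[of n "var ` Bset s F a"], of "Poly_Mapping.keys x" "\<lambda>t. Poly_Mapping.single t (Poly_Mapping.lookup x t)"] tm by blast
    then show "x \<in> ideal_gen n (var ` Bset s F a)" using poly_expand[of x] by simp
  qed
qed

end

definition sc :: "'a::field \<Rightarrow> (nat \<Rightarrow> 'a) \<Rightarrow> (nat \<Rightarrow> 'a)" where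
  "sc c f = (\<lambda>x. c * f x)"

lemma vs_sc: "vector_space (sc :: 'a::field \<Rightarrow> (nat \<Rightarrow> 'a) \<Rightarrow> (nat \<Rightarrow> 'a))"
  by unfold_locales (auto simp: sc_def fun_eq_iff algebra_simps)

lemma sum_fun_apply: "(\<Sum>i\<in>A. f i) x = (\<Sum>i\<in>A. (f i x :: 'b::comm_monoid_add))"
  by (induction A rule: infinite_finite_induct) (auto simp: plus_fun_def zero_fun_def)

definition Lin :: "('a::field) mpoly \<Rightarrow> (nat \<Rightarrow> 'a)" where
  "Lin p = (\<lambda>x. Poly_Mapping.lookup p (Poly_Mapping.single x 1))"

lemma Lin_sum: "Lin (\<Sum>i\<in>A. f i) = (\<Sum>i\<in>A. Lin (f i))"
  unfolding Lin_def by (rule ext) (simp add: lookup_sum sum_fun_apply)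

lemma no_split_single:
  assumes "a \<noteq> 0" "b \<noteq> 0" shows "a + b \<noteq> Poly_Mapping.single (x::nat) (1::nat)"
proof
  assume e: "a + b = Poly_Mapping.single x 1"
  obtain y where y: "Poly_Mapping.lookup a y \<noteq> 0" using assms(1) by (metis lookup_zero poly_mapping_eqI)
  obtain z where z: "Poly_Mapping.lookup b z \<noteq> 0" using assms(2) by (metis lookup_zero poly_mapping_eqI)
  have ly: "Poly_Mapping.lookup a y + Poly_Mapping.lookup b y = (1 when x = y)"
    using arg_cong[where f="\<lambda>m. Poly_Mapping.lookup m y", OF e] by (simp add: lookup_add lookup_single)
  have lz: "Poly_Mapping.lookup a z + Poly_Mapping.lookup b z = (1 when x = z)"
    using arg_cong[where f="\<lambda>m. Poly_Mapping.lookup m z", OF e] by (simp add: lookup_add lookup_single)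
  have "y = x" using ly y by (auto simp: when_def split: if_splits)
  moreover have "z = x" using lz z by (auto simp: when_def split: if_splits)
  ultimately show False using ly y z by (simp add: when_def)
qed

lemma lookup_single0_mult: "Poly_Mapping.lookup (Poly_Mapping.single 0 c * p) k = c * Poly_Mapping.lookup (p :: 'a::field mpoly) k"
  unfolding mult_map_scale_conv_mult[symmetric] by (simp add: map.rep_eq when_def)

lemma Lin_mult:
  assumes g0: "Poly_Mapping.lookup (g :: 'a::field mpoly) 0 = 0"
  shows "Lin (q * g) = sc (Poly_Mapping.lookup q 0) (Lin g)"
proof -
  define c where "c = Poly_Mapping.lookup q 0"
  define q' where "q' = q - Poly_Mapping.single 0 c"
  have q'0: "Poly_Mapping.lookup q' 0 = 0" by (simp add: q'_def c_def lookup_minus)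
  have qe: "q = Poly_Mapping.single 0 c + q'" by (simp add: q'_def)
  have z: "Poly_Mapping.lookup (q' * g) (Poly_Mapping.single x 1) = 0" for x
  proof (rule ccontr)
    assume "Poly_Mapping.lookup (q' * g) (Poly_Mapping.single x 1) \<noteq> 0"
    then have "Poly_Mapping.single x 1 \<in> Poly_Mapping.keys (q' * g)" by (simp add: in_keys_iff)
    then obtain a b where ab: "Poly_Mapping.single x 1 = a + b" "a \<in> Poly_Mapping.keys q'" "b \<in> Poly_Mapping.keys g"
      using keys_mult[of q' g] by blast
    have "a \<noteq> 0" using ab(2) q'0 by (auto simp: in_keys_iff)
    moreover have "b \<noteq> 0" using ab(3) g0 by (auto simp: in_keys_iff)
    ultimately show False using no_split_single ab(1) by metis
  qed
  show ?thesis unfolding Lin_def sc_def c_def[symmetric]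
    by (rule ext) (simp add: qe distrib_right lookup_add lookup_single0_mult z z[unfolded One_nat_def])
qed

lemma Lin_var: "Lin (var b :: 'a::field mpoly) = (\<lambda>x. if x = b then 1 else 0)"
proof (rule ext)
  fix x
  have "(Poly_Mapping.single b (1::nat) = Poly_Mapping.single x 1) \<longleftrightarrow> b = x"
    by (metis lookup_single_eq lookup_single_not_eq zero_neq_one)
  then show "Lin (var b :: 'a mpoly) x = (if x = b then 1 else 0)"
    unfolding Lin_def var_def monom_def by (auto simp: lookup_single when_def)
qed

lemma lower_bound:
  assumes G: "finite G" and B: "finite B"
    and eq: "ideal_gen n G = ideal_gen n (var ` B :: 'a::field mpoly set)"
  shows "card B \<le> card G"
proof -
  interpret V: vector_space "sc :: 'a \<Rightarrow> (nat \<Rightarrow> 'a) \<Rightarrow> (nat \<Rightarrow> 'a)" by (rule vs_sc)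
  define e where "e b = (\<lambda>x::nat. if x = b then (1::'a) else 0)" for b :: nat
  have varB: "(var ` B :: 'a mpoly set) = monom ` ((\<lambda>b. Poly_Mapping.single b 1) ` B)"
    by (auto simp: var_monom)
  have g0: "Poly_Mapping.lookup g 0 = 0" if g: "g \<in> G" for g
  proof (rule ccontr)
    assume "Poly_Mapping.lookup g 0 \<noteq> 0"
    then have "0 \<in> Poly_Mapping.keys g" by (simp add: in_keys_iff)
    moreover have "g \<in> ideal_gen n (monom ` ((\<lambda>b. Poly_Mapping.single b 1) ` B))"
      using subsetD[OF ideal_gen_base[of G n] g] eq varB by simp
    ultimately obtain u where "u \<in> (\<lambda>b. Poly_Mapping.single b 1) ` B" "mdvd u 0"
      using monomial_ideal_keys[of g n "(\<lambda>b. Poly_Mapping.single b 1) ` B" 0] by blast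
    then obtain b where "mdvd (Poly_Mapping.single b 1) 0" by blast
    then show False unfolding mdvd_def by (metis lookup_single_eq lookup_zero not_one_le_zero)
  qed
  have espan: "e b \<in> V.span (Lin ` G)" if b: "b \<in> B" for b
  proof -
    have "(var b :: 'a mpoly) \<in> ideal_gen n G" using subsetD[OF ideal_gen_base[of "var ` B" n] imageI[OF b]] eq by simp
    then obtain A q where A: "var b = (\<Sum>g\<in>A. q g * g)" "finite A" "A \<subseteq> G"
      unfolding ideal_gen_def by blast
    have "e b = Lin (var b :: 'a mpoly)" by (simp add: Lin_var e_def)
    also have "\<dots> = (\<Sum>g\<in>A. sc (Poly_Mapping.lookup (q g) 0) (Lin g))"
      unfolding A(1) Lin_sum using A(3) g0 by (intro sum.cong refl Lin_mult) blast
    also have "\<dots> \<in> V.span (Lin ` G)"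
      using A(3) by (intro V.span_sum V.span_scale V.span_base) blast
    finally show ?thesis .
  qed
  have inj: "inj_on e B" unfolding e_def inj_on_def by (metis zero_neq_one)
  have indep: "V.independent (e ` B)"
  proof (rule V.independent_if_scalars_zero)
    show "finite (e ` B)" using B by simp
  next
    fix f x assume s: "(\<Sum>x\<in>e ` B. sc (f x) x) = 0" and x: "x \<in> e ` B"
    then obtain b where b: "b \<in> B" "x = e b" by blast
    have "0 = (\<Sum>y\<in>e ` B. sc (f y) y) b" using s by simp
    also have "\<dots> = (\<Sum>y\<in>e ` B. f y * y b)" by (simp add: sum_fun_apply sc_def)
    also have "\<dots> = (\<Sum>y\<in>e ` B. if y = e b then f y else 0)"
    proof (rule sum.cong[OF refl])
      fix y assume "y \<in> e ` B"
      then obtain b' where "b' \<in> B" "y = e b'" by blast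
      then show "f y * y b = (if y = e b then f y else 0)"
      proof (cases "b' = b")
        case True then show ?thesis using \<open>y = e b'\<close> by (simp add: e_def)
      next
        case False
        then have "e b' \<noteq> e b" using inj b(1) \<open>b' \<in> B\<close> unfolding inj_on_def by blast
        moreover have "e b' b = 0" using False by (simp add: e_def)
        ultimately show ?thesis using \<open>y = e b'\<close> by simp
      qed
    qed
    also have "\<dots> = f (e b)" using b(1) B by (simp add: sum.delta')
    finally show "f x = 0" using b by simp
  qed
  have "e ` B \<subseteq> V.span (Lin ` G)" using espan by blast
  then have "card (e ` B) \<le> card (Lin ` G)"
    using V.independent_span_bound[OF finite_imageI[OF G] indep] by blast
  also have "\<dots> \<le> card G" using G by (rule card_image_le)
  finally show ?thesis using card_image[OF inj] by simp
qed

lemma var_inj: "(var b :: 'a::field mpoly) = var b' \<Longrightarrow> b = b'"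
proof -
  assume "(var b :: 'a mpoly) = var b'"
  then have "Lin (var b :: 'a mpoly) b = Lin (var b' :: 'a mpoly) b" by simp
  then show "b = b'" unfolding Lin_var by (metis zero_neq_one)
qed

lemma var_polyring: "b \<in> {1..n} \<Longrightarrow> (var b :: 'a::field mpoly) \<in> polyring n"
  unfolding var_monom by (rule polyring_monom) simp

lemma mdeg_single: "mdeg (Poly_Mapping.single b (1::nat)) = 1"
  unfolding mdeg_def by simp

lemma var_linear: "linear_form (var b :: 'a::field mpoly)"
  unfolding linear_form_def var_def monom_def by (simp add: mdeg_single mdeg_single[unfolded One_nat_def])

lemma var_homog: "homogeneous (var b :: 'a::field mpoly)"
  unfolding homogeneous_def var_def monom_def by (simp add: mdeg_single mdeg_single[unfolded One_nat_def])

lemma N_le: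
  assumes "finite B" "B \<subseteq> {1..n}"
  shows "min_num_hom_gens n (ideal_gen n (var ` B :: 'a::field mpoly set)) \<le> card B"
proof -
  have inj: "inj_on (var :: nat \<Rightarrow> 'a mpoly) B" unfolding inj_on_def using var_inj by blast
  have "\<exists>G. finite G \<and> card G = card B \<and> G \<subseteq> polyring n \<and> (\<forall>g\<in>G. homogeneous g)
      \<and> ideal_gen n G = ideal_gen n (var ` B :: 'a mpoly set)"
    apply (rule exI[of _ "var ` B"])
    using assms card_image[OF inj] var_polyring[where 'a='a] var_homog[where 'a='a] by auto
  then show ?thesis unfolding min_num_hom_gens_def by (rule Least_le)
qed

lemma N_ge:
  assumes "finite B" "B \<subseteq> {1..n}"
  shows "card B \<le> min_num_hom_gens n (ideal_gen n (var ` B :: 'a::field mpoly set))"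
proof -
  have inj: "inj_on (var :: nat \<Rightarrow> 'a mpoly) B" unfolding inj_on_def using var_inj by blast
  have ex: "\<exists>G. finite G \<and> card G = card B \<and> G \<subseteq> polyring n \<and> (\<forall>g\<in>G. homogeneous g)
      \<and> ideal_gen n G = ideal_gen n (var ` B :: 'a mpoly set)"
    apply (rule exI[of _ "var ` B"])
    using assms card_image[OF inj] var_polyring[where 'a='a] var_homog[where 'a='a] by auto
  have ex2: "\<exists>c. \<exists>G. finite G \<and> card G = c \<and> G \<subseteq> polyring n \<and> (\<forall>g\<in>G. homogeneous g)
      \<and> ideal_gen n G = ideal_gen n (var ` B :: 'a mpoly set)"
    using ex by blast
  obtain G where G: "finite G" "card G = min_num_hom_gens n (ideal_gen n (var ` B :: 'a mpoly set))"
    "ideal_gen n G = ideal_gen n (var ` B :: 'a mpoly set)"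
    using LeastI_ex[OF ex2] unfolding min_num_hom_gens_def by blast
  have "card B \<le> card G" by (rule lower_bound[OF G(1) assms(1) G(3)])
  then show ?thesis using G(2) by simp
qed

context blocks
begin

lemma Bset_sub: "Bset s F a \<subseteq> {1..n}"
  unfolding Bset_def using Fsub by blast

lemma Bset_card_le:
  assumes a: "\<forall>j\<in>{1..s}. a j \<in> F j" and k: "\<And>j. j \<in> {1..s} \<Longrightarrow> card (F j) = k" and k1: "k > 1"
  shows "card (Bset s F a) \<le> (k - 1) * s"
proof -
  have fin: "finite (F j)" if "j \<in> {1..s}" for j using k[OF that] k1 card.infinite by fastforce
  have "Bset s F a \<subseteq> (\<Union>j\<in>{1..s}. F j - {a j})" unfolding Bset_def by auto
  moreover have "finite (\<Union>j\<in>{1..s}. F j - {a j})" using fin by auto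
  ultimately have "card (Bset s F a) \<le> card (\<Union>j\<in>{1..s}. F j - {a j})" by (rule card_mono[rotated])
  also have "\<dots> \<le> (\<Sum>j\<in>{1..s}. card (F j - {a j}))" by (rule card_UN_le) simp
  also have "\<dots> = (\<Sum>j\<in>{1..s}. k - 1)"
    using a k fin by (intro sum.cong refl) (simp add: card_Diff_singleton)
  also have "\<dots> = (k - 1) * s" by simp
  finally show ?thesis .
qed

lemma Bset_card_max:
  assumes a: "\<forall>j\<in>{1..s}. a j \<in> F j" and k: "\<And>j. j \<in> {1..s} \<Longrightarrow> card (F j) = k" and k1: "k > 1"
    and amax: "\<forall>j\<in>{1..s}. a j = Max (F j)"
  shows "card (Bset s F a) = (k - 1) * s"
proof -
  have fin: "finite (F j)" if "j \<in> {1..s}" for j using k[OF that] k1 card.infinite by fastforce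
  have "Bset s F a = (\<Union>j\<in>{1..s}. F j - {a j})"
  proof (rule antisym)
    show "Bset s F a \<subseteq> (\<Union>j\<in>{1..s}. F j - {a j})" unfolding Bset_def by auto
    show "(\<Union>j\<in>{1..s}. F j - {a j}) \<subseteq> Bset s F a"
    proof
      fix b assume "b \<in> (\<Union>j\<in>{1..s}. F j - {a j})"
      then obtain j where j: "j \<in> {1..s}" "b \<in> F j" "b \<noteq> a j" by blast
      have "b \<le> Max (F j)" using fin[OF j(1)] j(2) by simp
      then have "b < a j" using amax j(1,3) by fastforce
      then show "b \<in> Bset s F a" unfolding Bset_def using j by blast
    qed
  qed
  also have "card \<dots> = (\<Sum>j\<in>{1..s}. card (F j - {a j}))"
  proof (rule card_UN_disjoint)
    show "\<forall>j\<in>{1..s}. finite (F j - {a j})" using fin by simp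
    show "\<forall>i\<in>{1..s}. \<forall>j\<in>{1..s}. i \<noteq> j \<longrightarrow> (F i - {a i}) \<inter> (F j - {a j}) = {}"
      using disj by blast
  qed simp
  also have "\<dots> = (\<Sum>j\<in>{1..s}. k - 1)"
    using a k fin by (intro sum.cong refl) (simp add: card_Diff_singleton)
  also have "\<dots> = (k - 1) * s" by simp
  finally show ?thesis .
qed

end

theorem lemma3p1:
  fixes n k s :: nat and F :: "nat \<Rightarrow> nat set" and f :: "nat \<Rightarrow> monomial"
  assumes "s \<ge> 1" and "k > 1"
    and "\<And>j. j \<in> {1..s} \<Longrightarrow> F j \<subseteq> {1..n}"
    and "\<And>j. j \<in> {1..s} \<Longrightarrow> card (F j) = k"
    and "\<And>i j. i \<in> {1..s} \<Longrightarrow> j \<in> {1..s} \<Longrightarrow> i \<noteq> j \<Longrightarrow> F i \<inter> F j = {}"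
    and "bij_betw f {1..k ^ s}
           (min_monomial_gens n (ideal_prod n (\<lambda>j. var_ideal n (F j)) s :: 'a::field mpoly set))"
    and "\<And>i j. i \<in> {1..k ^ s} \<Longrightarrow> j \<in> {1..k ^ s} \<Longrightarrow> i < j \<Longrightarrow> lex_gt (f i) (f j)"
  defines "N \<equiv> (\<lambda>i. min_num_hom_gens n
                    (colon n (ideal_gen n (monom ` f ` {1..<i})) (monom (f i) :: 'a mpoly)))"
  shows "Max (N ` {2..k ^ s}) = N (k ^ s) \<and> N (k ^ s) = (k - 1) * s
    \<and> (\<forall>i\<in>{1..k ^ s}. \<exists>G. G \<subseteq> polyring n \<and> (\<forall>g\<in>G. linear_form g)
          \<and> ideal_gen n G = colon n (ideal_gen n (monom ` f ` {1..<i})) (monom (f i) :: 'a mpoly))"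
proof -
  have blk: "blocks n s F"
  proof
    show "\<And>j. j \<in> {1..s} \<Longrightarrow> F j \<subseteq> {1..n}" by (rule assms(3))
    show "\<And>i j. i \<in> {1..s} \<Longrightarrow> j \<in> {1..s} \<Longrightarrow> i \<noteq> j \<Longrightarrow> F i \<inter> F j = {}" by (rule assms(5))
  qed
  interpret blocks n s F by (rule blk)
  define K where "K = k ^ s"
  have I: "ideal_prod n (\<lambda>j. var_ideal n (F j)) s = (ideal_gen n (monom ` Mset s F) :: 'a mpoly set)"
    by (rule ideal_prod_eq)
  have bij: "bij_betw f {1..K} (Mset s F)"
    using assms(6) unfolding I mingens_eq K_def .
  have fim: "f ` {1..K} = Mset s F" using bij by (simp add: bij_betw_def)
  have fM: "\<exists>a. (\<forall>j\<in>{1..s}. a j \<in> F j) \<and> f i = msum s a" if "i \<in> {1..K}" for i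
  proof -
    have "f i \<in> Mset s F" using fim that by blast
    then show ?thesis unfolding Mset_def by blast
  qed
  have lexord: "j < i" if i: "i \<in> {1..K}" and j: "j \<in> {1..K}" and l: "lex_gt (f j) (f i)" for i j
  proof (rule ccontr)
    assume "\<not> j < i"
    then have "i < j \<or> i = j" by auto
    then show False
    proof
      assume "i < j"
      then have "lex_gt (f i) (f j)" using assms(7) i j unfolding K_def by blast
      then show False using lex_asym l by blast
    next
      assume "i = j" then show False using l lex_irrefl by simp
    qed
  qed
  have pre: "f ` {1..<i} = {u \<in> Mset s F. lex_gt u (f i)}" if i: "i \<in> {1..K}" for i
  proof (rule antisym; rule subsetI)
    fix u assume "u \<in> f ` {1..<i}"
    then obtain j where j: "j \<in> {1..<i}" "u = f j" by blast
    have jK: "j \<in> {1..K}" using j(1) i by auto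
    have "u \<in> Mset s F" using fim jK j(2) by blast
    moreover have "lex_gt u (f i)" using assms(7)[of j i] jK i j unfolding K_def by auto
    ultimately show "u \<in> {u \<in> Mset s F. lex_gt u (f i)}" by simp
  next
    fix u assume u: "u \<in> {u \<in> Mset s F. lex_gt u (f i)}"
    then obtain j where j: "j \<in> {1..K}" "u = f j" using fim by (metis (mono_tags, lifting) imageE mem_Collect_eq)
    have "j < i" using lexord[OF i j(1)] u j(2) by simp
    then show "u \<in> f ` {1..<i}" using j by auto
  qed
  have col: "colon n (ideal_gen n (monom ` f ` {1..<i})) (monom (f i) :: 'a mpoly) = ideal_gen n (var ` Bset s F a)"
    if i: "i \<in> {1..K}" and a: "\<forall>j\<in>{1..s}. a j \<in> F j" and fi: "f i = msum s a" for i a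
    using colon_eq[OF a, where 'a='a] pre[OF i] fi by simp
  have finB: "finite (Bset s F a)" for a using Bset_sub finite_subset by blast
  have Nle: "N i \<le> (k - 1) * s" if i: "i \<in> {1..K}" for i
  proof -
    obtain a where a: "\<forall>j\<in>{1..s}. a j \<in> F j" and fi: "f i = msum s a" using fM[OF i] by blast
    have "N i = min_num_hom_gens n (ideal_gen n (var ` Bset s F a :: 'a mpoly set))"
      unfolding N_def using col[OF i a fi] by simp
    also have "\<dots> \<le> card (Bset s F a)" by (rule N_le[OF finB Bset_sub])
    also have "\<dots> \<le> (k - 1) * s" by (rule Bset_card_le[OF a assms(4) assms(2)])
    finally show ?thesis .
  qed
  have K2: "2 \<le> K"
  proof -
    have "k ^ 1 \<le> k ^ s" using assms(1,2) by (intro power_increasing) auto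
    then show ?thesis using assms(2) unfolding K_def by simp
  qed
  have KK: "K \<in> {1..K}" using K2 by simp
  have last: "N K = (k - 1) * s"
  proof -
    obtain a where a: "\<forall>j\<in>{1..s}. a j \<in> F j" and fi: "f K = msum s a" using fM[OF KK] by blast
    have fin: "finite (F j)" if "j \<in> {1..s}" for j using assms(4)[OF that] assms(2) card.infinite by fastforce
    have amax: "\<forall>j\<in>{1..s}. a j = Max (F j)"
    proof
      fix j assume j: "j \<in> {1..s}"
      show "a j = Max (F j)"
      proof (rule ccontr)
        assume ne: "a j \<noteq> Max (F j)"
        have ajF: "a j \<in> F j" using a j by blast
        have "a j \<le> Max (F j)" using fin[OF j] ajF by simp
        then have lt: "a j < Max (F j)" using ne by simp
        have MF: "Max (F j) \<in> F j" using fin[OF j] ajF by (intro Max_in) auto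
        define c where "c = a(j := Max (F j))"
        have c: "\<forall>i\<in>{1..s}. c i \<in> F i" unfolding c_def by (rule good_upd[OF a MF])
        have "lex_gt (msum s (c(j := a j))) (msum s c)"
          by (rule swap_lex[OF c j ajF]) (simp add: c_def lt)
        moreover have "c(j := a j) = a" unfolding c_def by simp
        ultimately have l: "lex_gt (f K) (msum s c)" using fi by simp
        have "msum s c \<in> Mset s F" unfolding Mset_def using c by blast
        then obtain j' where j': "j' \<in> {1..K}" "msum s c = f j'" using fim by (metis imageE)
        have "K < j'" using lexord[OF j'(1) KK] l j'(2) by simp
        then show False using j' by simp
      qed
    qed
    have "N K = min_num_hom_gens n (ideal_gen n (var ` Bset s F a :: 'a mpoly set))"
      unfolding N_def using col[OF KK a fi] by simp
    moreover have "\<dots> \<le> card (Bset s F a)" by (rule N_le[OF finB Bset_sub])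
    moreover have "card (Bset s F a) \<le> min_num_hom_gens n (ideal_gen n (var ` Bset s F a :: 'a mpoly set))"
      by (rule N_ge[OF finB Bset_sub])
    moreover have "card (Bset s F a) = (k - 1) * s" by (rule Bset_card_max[OF a assms(4) assms(2) amax])
    ultimately show ?thesis by linarith
  qed
  have lin: "\<forall>i\<in>{1..K}. \<exists>G. G \<subseteq> polyring n \<and> (\<forall>g\<in>G. linear_form g)
          \<and> ideal_gen n G = colon n (ideal_gen n (monom ` f ` {1..<i})) (monom (f i) :: 'a mpoly)"
  proof
    fix i assume i: "i \<in> {1..K}"
    obtain a where a: "\<forall>j\<in>{1..s}. a j \<in> F j" and fi: "f i = msum s a" using fM[OF i] by blast
    show "\<exists>G. G \<subseteq> polyring n \<and> (\<forall>g\<in>G. linear_form g)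
          \<and> ideal_gen n G = colon n (ideal_gen n (monom ` f ` {1..<i})) (monom (f i) :: 'a mpoly)"
    proof (rule exI[of _ "var ` Bset s F a"], intro conjI)
      show "(var ` Bset s F a :: 'a mpoly set) \<subseteq> polyring n"
        using Bset_sub var_polyring by blast
      show "\<forall>g\<in>(var ` Bset s F a :: 'a mpoly set). linear_form g" using var_linear by blast
      show "ideal_gen n (var ` Bset s F a) = colon n (ideal_gen n (monom ` f ` {1..<i})) (monom (f i) :: 'a mpoly)"
        using col[OF i a fi] by simp
    qed
  qed
  have mx: "Max (N ` {2..K}) = N K"
  proof (rule Max_eqI)
    show "finite (N ` {2..K})" by simp
    show "N K \<in> N ` {2..K}" using K2 by simp
    fix y assume "y \<in> N ` {2..K}"
    then obtain i where "i \<in> {2..K}" "y = N i" by blast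
    then show "y \<le> N K" using Nle[of i] last by simp
  qed
  show ?thesis using mx last lin unfolding K_def by simp
qed

end
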